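(* Let $S>0$ and $\xi<0$, and define for $x>0$ \[ f(x)=N\!\left(\xi+\frac1S\ln x\right)-x^{-\frac{2\xi}{S}}N\!\left(\xi-\frac1S\ln x\right). \] Then there exists $\varepsilon>0$ such that $f(x)<0$ and $f'(x)<0$ for all $x\in(0,\varepsilon)$. Moreover, if $-S/2<\xi<0$ then $\lim_{x\to0^+}f'(x)=-\infty$; if $\xi=-S/2$ then $\lim_{x\to0^+}f'(x)=-1$; and if $\xi<-S/2$ then $\lim_{x\to0^+}f'(x)=0$.
   Context: $N(x)=\frac{1}{\sqrt{2\pi}}\int_{-\infty}^{x}e^{-s^2/2}\,ds$ is the standard normal distribution function. *)

theory Defs
  imports "HOL-Analysis.Analysis"
begin

definition N :: "real \<Rightarrow> real" where
  "N x = (1 / sqrt (2 * pi)) * (LBINT s:{..x}. exp (- (s\<^sup>2) / 2))"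

end

theory Submission
  imports Defs "HOL-Probability.Probability" "HOL-Real_Asymp.Real_Asymp"
begin

lemma N_alt: "N x = set_lebesgue_integral lborel {..x} std_normal_density"
  unfolding N_def std_normal_density_def by (simp add: set_integral_mult_right)

lemma si_phi: "A \<in> sets lborel \<Longrightarrow> set_integrable lborel A std_normal_density"
  unfolding set_integrable_def by (rule integrable_mult_indicator) auto

lemma sbm_phi: "A \<in> sets lborel \<Longrightarrow> set_borel_measurable lborel A std_normal_density"
  using si_phi unfolding set_integrable_def set_borel_measurable_def by auto

lemma N_split: assumes "a \<le> x"
  shows "N x = N a + integral {a..x} std_normal_density"
proof -
  have e: "{..x} = {..a} \<union> {a<..x}" using assms by auto
  have "N x = N a + set_lebesgue_integral lborel {a<..x} std_normal_density"
    unfolding N_alt e by (rule set_integral_Un) (auto intro: si_phi)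
  also have "set_lebesgue_integral lborel {a<..x} std_normal_density
      = set_lebesgue_integral lborel {a..x} std_normal_density"
    by (rule set_integral_cong_set) (auto intro: sbm_phi eventually_mono[OF AE_lborel_singleton[of a]])
  also have "\<dots> = integral {a..x} std_normal_density"
    by (rule set_borel_integral_eq_integral(2)[OF si_phi]) auto
  finally show ?thesis .
qed

lemma N_split': assumes "a \<le> x"
  shows "N x = N a + set_lebesgue_integral lborel {a..x} std_normal_density"
  using N_split[OF assms] set_borel_integral_eq_integral(2)[OF si_phi[of "{a..x}"]] by simp

lemma cont_phi: "continuous_on A std_normal_density"
  unfolding std_normal_density_def by (intro continuous_intros) auto

lemma N_deriv: "(N has_real_derivative std_normal_density x) (at x)"
proof -
  have "((\<lambda>u. N (x - 1) + integral {x - 1..u} std_normal_density) has_real_derivative std_normal_density x) (at x within {x-1..x+1})"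
    using integral_has_vector_derivative[OF cont_phi, of x "x-1" "x+1"]
    by (auto simp: has_real_derivative_iff_has_vector_derivative intro!: derivative_eq_intros)
  hence d: "((\<lambda>u. N (x - 1) + integral {x - 1..u} std_normal_density) has_real_derivative std_normal_density x) (at x)"
    by (subst (asm) at_within_interior) auto
  have ev: "eventually (\<lambda>u. N u = N (x - 1) + integral {x - 1..u} std_normal_density) (nhds x)"
    by (rule eventually_mono[OF eventually_nhds_in_open[of "{x-1<..}"]]) (auto simp: N_split)
  show ?thesis using DERIV_cong_ev[OF refl ev refl] d by simp
qed

lemma N_top: "(N \<longlongrightarrow> 1) at_top"
proof -
  have "((\<lambda>b. N 0 + set_lebesgue_integral lborel {0..b} std_normal_density) \<longlongrightarrow>
         N 0 + set_lebesgue_integral lborel {0..} std_normal_density) at_top"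
    by (intro tendsto_intros tendsto_set_lebesgue_integral_at_top si_phi) auto
  moreover have "N 0 + set_lebesgue_integral lborel {0..} std_normal_density = 1"
  proof -
    have e: "(UNIV::real set) = {..0} \<union> {0<..}" by auto
    have "N 0 + set_lebesgue_integral lborel {0<..} std_normal_density = set_lebesgue_integral lborel UNIV std_normal_density"
      unfolding N_alt e by (rule set_integral_Un[symmetric]) (auto intro: si_phi)
    also have "\<dots> = 1" by (simp add: set_lebesgue_integral_def)
    also have "set_lebesgue_integral lborel {0<..} std_normal_density
      = set_lebesgue_integral lborel {0..} std_normal_density"
      by (rule set_integral_cong_set) (auto intro: sbm_phi eventually_mono[OF AE_lborel_singleton[of 0]])
    finally show ?thesis .
  qed
  moreover have "eventually (\<lambda>b. N 0 + set_lebesgue_integral lborel {0..b} std_normal_density = N b) at_top"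
    unfolding eventually_at_top_linorder by (auto simp: N_split' intro!: exI[of _ 0])
  ultimately show ?thesis using Lim_transform_eventually by fastforce
qed

lemma N_bot: "(N \<longlongrightarrow> 0) at_bot"
proof -
  have "((\<lambda>a. N 0 - set_lebesgue_integral lborel {a..0} std_normal_density) \<longlongrightarrow>
         N 0 - set_lebesgue_integral lborel {..0} std_normal_density) at_bot"
    by (intro tendsto_intros tendsto_set_lebesgue_integral_at_bot si_phi) auto
  moreover have "N 0 - set_lebesgue_integral lborel {..0} std_normal_density = 0"
    by (simp add: N_alt)
  moreover have "eventually (\<lambda>b. N 0 - set_lebesgue_integral lborel {b..0} std_normal_density = N b) at_bot"
    unfolding eventually_at_bot_linorder by (auto simp: N_split'[of _ 0] intro!: exI[of _ 0])
  ultimately show ?thesis using Lim_transform_eventually by fastforce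
qed

lemma N_chain: "(g has_real_derivative g') (at x within s) \<Longrightarrow>
  ((\<lambda>x. N (g x)) has_real_derivative std_normal_density (g x) * g') (at x within s)"
  using DERIV_chain2[OF N_deriv] by blast

theorem lemma1:
  fixes S \<xi> :: real and f :: "real \<Rightarrow> real"
  assumes S_pos: "S > 0" and xi_neg: "\<xi> < 0"
    and f_def: "\<And>x. x > 0 \<Longrightarrow>
       f x = N (\<xi> + ln x / S) - x powr (- 2 * \<xi> / S) * N (\<xi> - ln x / S)"
  shows "(\<exists>\<epsilon>>0. \<forall>x\<in>{0<..<\<epsilon>}. f x < 0 \<and> deriv f x < 0)
    \<and> (- S / 2 < \<xi> \<longrightarrow> filterlim (deriv f) at_bot (at_right 0))
    \<and> (\<xi> = - S / 2 \<longrightarrow> (deriv f \<longlongrightarrow> -1) (at_right 0))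
    \<and> (\<xi> < - S / 2 \<longrightarrow> (deriv f \<longlongrightarrow> 0) (at_right 0))"
proof -
  define a where "a = - 2 * \<xi> / S"
  have a_pos: "a > 0" using S_pos xi_neg by (simp add: a_def field_simps)
  define \<phi> where "\<phi> = std_normal_density"
  define D where "D x = \<phi> (\<xi> + ln x / S) * (1 / (S * x))
     - (a * x powr (a - 1) * N (\<xi> - ln x / S) - x powr a * (\<phi> (\<xi> - ln x / S) * (1 / (S * x))))" for x
  define R where "R x = (\<phi> (\<xi> + ln x / S) / (S * x) + x powr a * \<phi> (\<xi> - ln x / S) / (S * x)) / x powr (a - 1)" for x
  have fd: "(f has_real_derivative D x) (at x)" if x: "x > 0" for x
  proof -
    have dg: "((\<lambda>x. N (\<xi> + ln x / S) - x powr a * N (\<xi> - ln x / S)) has_real_derivative D x) (at x)"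
    proof -
      have d1: "((\<lambda>x. \<xi> + ln x / S) has_real_derivative 1 / (S * x)) (at x)"
        using x S_pos by (auto intro!: derivative_eq_intros)
      have d2: "((\<lambda>x. \<xi> - ln x / S) has_real_derivative - (1 / (S * x))) (at x)"
        using x S_pos by (auto intro!: derivative_eq_intros)
      have d3: "((\<lambda>x. x powr a) has_real_derivative a * x powr (a - 1)) (at x)"
        using has_real_derivative_powr[OF x] .
      show ?thesis unfolding D_def \<phi>_def
        by (rule DERIV_cong[OF DERIV_diff[OF N_chain[OF d1] DERIV_mult[OF d3 N_chain[OF d2]]]]) simp
    qed
    have ev: "eventually (\<lambda>y. f y = N (\<xi> + ln y / S) - y powr a * N (\<xi> - ln y / S)) (nhds x)"
      by (rule eventually_mono[OF eventually_nhds_in_open[of "{0<..}"]]) (use x in \<open>auto simp: f_def a_def\<close>)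
    show ?thesis using DERIV_cong_ev[OF refl ev refl] dg by simp
  qed
  have dfD: "deriv f x = D x" if "x > 0" for x
    using fd[OF that] by (rule DERIV_imp_deriv)
  define B where "B x = R x - a * N (\<xi> - ln x / S)" for x
  have fac: "D x = x powr (a - 1) * B x" if x: "x > 0" for x
  proof -
    have "x powr (a - 1) > 0" using x by simp
    thus ?thesis using x S_pos by (simp add: D_def R_def B_def field_simps)
  qed
  have ev0: "eventually (\<lambda>x. x > 0) (at_right (0::real))"
    by (rule eventually_at_right_less)
  have evd: "eventually (\<lambda>x. deriv f x = x powr (a - 1) * B x) (at_right 0)"
    by (rule eventually_mono[OF ev0]) (simp add: dfD fac)
  have Rlim: "(R \<longlongrightarrow> 0) (at_right 0)"
    unfolding R_def \<phi>_def std_normal_density_def using S_pos a_pos by real_asymp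
  have Nlim: "((\<lambda>x. N (\<xi> - ln x / S)) \<longlongrightarrow> 1) (at_right 0)"
    by (rule filterlim_compose[OF N_top]) (use S_pos in real_asymp)
  have Nlim0: "((\<lambda>x. N (\<xi> + ln x / S)) \<longlongrightarrow> 0) (at_right 0)"
    by (rule filterlim_compose[OF N_bot]) (use S_pos in real_asymp)
  have Blim: "(B \<longlongrightarrow> - a) (at_right 0)"
    unfolding B_def using Rlim Nlim by (auto intro!: tendsto_eq_intros)
  have Pa0: "((\<lambda>x::real. x powr a) \<longlongrightarrow> 0) (at_right 0)"
    using a_pos by real_asymp
  have glim: "((\<lambda>x. N (\<xi> + ln x / S) - x powr a * N (\<xi> - ln x / S)) \<longlongrightarrow> 0) (at_right 0)"
    using tendsto_diff[OF Nlim0 tendsto_mult[OF Pa0 Nlim]] by simp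
  have flim: "(f \<longlongrightarrow> 0) (at_right 0)"
    by (rule Lim_transform_eventually[OF glim], rule eventually_mono[OF ev0]) (simp add: f_def a_def)
  have evneg: "eventually (\<lambda>x. deriv f x < 0) (at_right 0)"
  proof -
    have "eventually (\<lambda>x. B x < 0) (at_right 0)"
      using order_tendstoD(2)[OF Blim, of 0] a_pos by simp
    with evd ev0 have "eventually (\<lambda>x. B x < 0 \<and> deriv f x = x powr (a - 1) * B x \<and> x > 0) (at_right 0)"
      by (auto intro: eventually_conj)
    thus ?thesis
      by (rule eventually_mono) (auto simp: mult_pos_neg)
  qed
  then obtain \<epsilon> where \<epsilon>: "\<epsilon> > 0" "\<And>y. 0 < y \<Longrightarrow> y < \<epsilon> \<Longrightarrow> deriv f y < 0"
    unfolding eventually_at_right_field by auto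
  have dec: "f x < f y" if "0 < y" "y < x" "x < \<epsilon>" for x y
  proof (rule DERIV_neg_imp_decreasing_open[OF that(2)])
    fix z assume "y < z" "z < x"
    thus "\<exists>y. DERIV f z :> y \<and> y < 0"
      using that fd[of z] dfD[of z] \<epsilon>(2)[of z] by auto
  next
    show "continuous_on {y..x} f"
      using that by (intro continuous_at_imp_continuous_on ballI DERIV_isCont[OF fd]) auto
  qed
  have part1: "\<forall>x\<in>{0<..<\<epsilon>}. f x < 0 \<and> deriv f x < 0"
  proof
    fix x assume x: "x \<in> {0<..<\<epsilon>}"
    have "f (x / 2) \<le> 0"
    proof (rule tendsto_lowerbound[OF flim])
      show "eventually (\<lambda>y. f (x / 2) \<le> f y) (at_right 0)"
        unfolding eventually_at_right_field using x
        by (intro exI[of _ "x / 2"]) (auto intro!: less_imp_le dec)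
    qed simp
    moreover have "f x < f (x / 2)" using x by (intro dec) auto
    ultimately show "f x < 0 \<and> deriv f x < 0" using x \<epsilon> by auto
  qed
  have part2: "filterlim (deriv f) at_bot (at_right 0)" if "- S / 2 < \<xi>"
  proof -
    have "a < 1" using that S_pos by (simp add: a_def field_simps)
    hence "filterlim (\<lambda>x::real. x powr (a - 1)) at_top (at_right 0)" by real_asymp
    hence "filterlim (\<lambda>x. B x * x powr (a - 1)) at_bot (at_right 0)"
      by (rule filterlim_tendsto_neg_mult_at_bot[OF Blim, rotated]) (use a_pos in simp)
    thus ?thesis
      by (subst filterlim_cong[OF refl refl evd]) (simp add: mult.commute)
  qed
  have part3: "(deriv f \<longlongrightarrow> -1) (at_right 0)" if "\<xi> = - S / 2"
  proof -
    have "a = 1" using that S_pos by (simp add: a_def field_simps)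
    have "eventually (\<lambda>x. deriv f x = B x) (at_right 0)"
      using eventually_conj[OF evd ev0] by (rule eventually_mono) (simp add: \<open>a = 1\<close>)
    thus ?thesis using Blim \<open>a = 1\<close> by (simp add: tendsto_cong)
  qed
  have part4: "(deriv f \<longlongrightarrow> 0) (at_right 0)" if "\<xi> < - S / 2"
  proof -
    have "a > 1" using that S_pos by (simp add: a_def field_simps)
    hence "((\<lambda>x::real. x powr (a - 1)) \<longlongrightarrow> 0) (at_right 0)" by real_asymp
    hence "((\<lambda>x. x powr (a - 1) * B x) \<longlongrightarrow> 0 * (- a)) (at_right 0)"
      using Blim by (rule tendsto_mult)
    thus ?thesis using evd by (simp add: tendsto_cong)
  qed
  show ?thesis using part1 part2 part3 part4 \<epsilon>(1) by blast
qed

end
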